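(* Let $m$ be even, $\mathcal{M}$ a set of $m$ items, and let $H=(\mathcal{M},E)$ be an $m/2$-uniform hypergraph such that for every $S\subseteq\mathcal{M}$ with $|S|=m/2$ exactly one of $S$ and $\mathcal{M}\setminus S$ belongs to $E$. Then there exists a monotone submodular valuation function $v':2^{\mathcal{M}}\to\mathbb{R}_{\ge 0}$ with $v'(S)\ne v'(\mathcal{M}\setminus S)$ for all $|S|=m/2$ such that $H^{v'}=H$.
   Context: For a valuation $v$ with $v(S)\neq v(\mathcal{M}\setminus S)$ whenever $|S|=m/2$, the hypergraph $H^{v}=(\mathcal{M},E_v)$ has edge set $E_v=\{S\subset\mathcal{M}:|S|=m/2,\ v(S)>v(\mathcal{M}\setminus S)\}$. A set function $v$ is monotone if $S\subseteq T$ implies $v(S)\le v(T)$, and submodular if $v(S\cup\{g\})-v(S)\ge v(T\cup\{g\})-v(T)$ for all $S\subseteq T$ and $g\notin T$. *)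

theory Defs
  imports Complex_Main
begin

text \<open>Valuations on the ground set M are functions on subsets of M (values
outside Pow M are irrelevant).\<close>

definition monotone_val :: "'a set \<Rightarrow> ('a set \<Rightarrow> real) \<Rightarrow> bool" where
  "monotone_val M v \<longleftrightarrow> (\<forall>S T. S \<subseteq> T \<and> T \<subseteq> M \<longrightarrow> v S \<le> v T)"

definition submodular_val :: "'a set \<Rightarrow> ('a set \<Rightarrow> real) \<Rightarrow> bool" where
  "submodular_val M v \<longleftrightarrow> (\<forall>S T g. S \<subseteq> T \<and> T \<subseteq> M \<and> g \<in> M \<and> g \<notin> T \<longrightarrow>
      v (insert g S) - v S \<ge> v (insert g T) - v T)"

definition hyper_edges :: "'a set \<Rightarrow> ('a set \<Rightarrow> real) \<Rightarrow> 'a set set" where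
  "hyper_edges M v = {S. S \<subseteq> M \<and> 2 * card S = card M \<and> v S > v (M - S)}"

end

theory Submission
  imports Defs
begin

theorem mainTheorem5:
  fixes M :: "'a set" and E :: "'a set set" and m :: nat
  assumes "finite M" and "card M = m" and "even m"
    and "\<forall>S\<in>E. S \<subseteq> M \<and> card S = m div 2"
    and "\<forall>S. S \<subseteq> M \<and> card S = m div 2 \<longrightarrow> ((S \<in> E) \<noteq> (M - S \<in> E))"
  shows "\<exists>v :: 'a set \<Rightarrow> real.
           (\<forall>S\<subseteq>M. v S \<ge> 0) \<and> monotone_val M v \<and> submodular_val M v \<and>
           (\<forall>S. S \<subseteq> M \<and> card S = m div 2 \<longrightarrow> v S \<noteq> v (M - S)) \<and>
           hyper_edges M v = E"
proof -
  define f :: "nat \<Rightarrow> real" where "f k = 4 * real m * real k - real k ^ 2" for k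
  define ind :: "'a set \<Rightarrow> real" where "ind S = (if S \<in> E then 1/2 else 0)" for S
  define v where "v S = f (card S) + ind S" for S
  have ind: "0 \<le> ind S \<and> ind S \<le> 1/2" for S by (simp add: ind_def)
  have cardle: "S \<subseteq> M \<Longrightarrow> card S \<le> m" for S
    using assms(1,2) card_mono by blast
  have c1: "\<forall>S\<subseteq>M. v S \<ge> 0"
  proof (intro allI impI)
    fix S assume "S \<subseteq> M"
    then have "card S \<le> m" by (rule cardle)
    then have "real (card S) \<le> real m" by simp
    then have "real (card S) ^ 2 \<le> 4 * real m * real (card S)"
      by (simp add: power2_eq_square mult_right_mono)
    then show "v S \<ge> 0" using ind[of S] by (simp add: v_def f_def)
  qed
  have c2: "monotone_val M v" unfolding monotone_val_def
  proof (intro allI impI)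
    fix S T assume h: "S \<subseteq> T \<and> T \<subseteq> M"
    have fT: "finite T" using h assms(1) finite_subset by blast
    show "v S \<le> v T"
    proof (cases "S = T")
      case True then show ?thesis by simp
    next
      case False
      then have lt: "card S < card T" using h fT psubset_card_mono by blast
      have tm: "card T \<le> m" using h cardle by blast
      define s where "s = real (card S)"
      define t where "t = real (card T)"
      have "s + 1 \<le> t" "t \<le> real m" "0 \<le> s" using lt tm by (auto simp: s_def t_def)
      then have "(t - s) * (4 * real m - t - s) \<ge> 1 * 1"
        by (intro mult_mono) auto
      then have "f (card T) - f (card S) \<ge> 1"
        by (simp add: f_def s_def[symmetric] t_def[symmetric] power2_eq_square algebra_simps)
      then show ?thesis using ind[of S] ind[of T] by (simp add: v_def)
    qed
  qed
  have c3: "submodular_val M v" unfolding submodular_val_def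
  proof (intro allI impI)
    fix S T g assume h: "S \<subseteq> T \<and> T \<subseteq> M \<and> g \<in> M \<and> g \<notin> T"
    have fT: "finite T" using h assms(1) finite_subset by blast
    have fS: "finite S" using h fT finite_subset by blast
    show "v (insert g T) - v T \<le> v (insert g S) - v S"
    proof (cases "S = T")
      case True then show ?thesis by simp
    next
      case False
      then have lt: "card S < card T" using h fT psubset_card_mono by blast
      have gS: "g \<notin> S" using h by blast
      have cT: "card (insert g T) = card T + 1" using h fT by simp
      have cS: "card (insert g S) = card S + 1" using gS fS by simp
      define s where "s = real (card S)"
      define t where "t = real (card T)"
      have st: "s + 1 \<le> t" using lt by (simp add: s_def t_def)
      have "f (card T + 1) - f (card T) = 4 * real m - 2 * t - 1"
        by (simp add: f_def t_def power2_eq_square algebra_simps)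
      moreover have "f (card S + 1) - f (card S) = 4 * real m - 2 * s - 1"
        by (simp add: f_def s_def power2_eq_square algebra_simps)
      ultimately show ?thesis using st ind[of S] ind[of T] ind[of "insert g S"] ind[of "insert g T"]
        by (simp add: v_def cT cS)
    qed
  qed
  have key: "v S > v (M - S) \<longleftrightarrow> S \<in> E" if "S \<subseteq> M" "card S = m div 2" for S
  proof -
    have "card (M - S) = m div 2" using that assms(1,2,3)
      by (simp add: card_Diff_subset finite_subset, presburger)
    moreover have "(S \<in> E) \<noteq> (M - S \<in> E)" using assms(5) that by blast
    ultimately show ?thesis using that by (auto simp: v_def ind_def)
  qed
  have c4: "\<forall>S. S \<subseteq> M \<and> card S = m div 2 \<longrightarrow> v S \<noteq> v (M - S)"
  proof (intro allI impI)
    fix S assume h: "S \<subseteq> M \<and> card S = m div 2"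
    have "card (M - S) = m div 2"
      using conjunct1[OF h] conjunct2[OF h] assms(1,2,3)
      by (simp add: card_Diff_subset finite_subset, presburger)
    moreover have "(S \<in> E) \<noteq> (M - S \<in> E)" using assms(5) h by blast
    ultimately show "v S \<noteq> v (M - S)" using h by (auto simp: v_def ind_def)
  qed
  have c5: "hyper_edges M v = E"
  proof
    show "hyper_edges M v \<subseteq> E"
    proof
      fix S assume "S \<in> hyper_edges M v"
      then have "S \<subseteq> M" "2 * card S = m" "v S > v (M - S)"
        using assms(2) by (auto simp: hyper_edges_def)
      then show "S \<in> E" using key by fastforce
    qed
  next
    show "E \<subseteq> hyper_edges M v"
    proof
      fix S assume "S \<in> E"
      then have h: "S \<subseteq> M" "card S = m div 2" using assms(4) by auto
      then have "2 * card S = card M" using assms(2,3) by simp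
      then show "S \<in> hyper_edges M v" using key[OF h] \<open>S \<in> E\<close> h
        by (simp add: hyper_edges_def)
    qed
  qed
  show ?thesis using c1 c2 c3 c4 c5 by blast
qed

end
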